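(* Let $\Gamma\subsetneqq\mathbb{R}^n$ be an open convex cone with vertex at the origin such that $\{\lambda:\lambda_i>0\ \forall i\}\subset\Gamma\subset\{\lambda:\sum_i\lambda_i>0\}$, and let $f$ be a smooth symmetric function on $\Gamma$ with $\frac{\partial f}{\partial\lambda_i}>0$ in $\Gamma$, $i=1,\dots,n$. Let $A=\mathrm{diag}(a_1,\dots,a_n)$ with $0<a_1\leq\cdots\leq a_n$, and assume $\frac{\partial f}{\partial\lambda_1}(\lambda(A))=\max_{1\leq i\leq n}\frac{\partial f}{\partial\lambda_i}(\lambda(A))$. Let $u$ be a twice differentiable function of $s>0$, regarded as $x\mapsto u(s)$ with $s=\frac12x^TAx$, such that $u'(s)>0$, $u''(s)\leq0$, and $$\lim_{s\to+\infty}u'(s)=1,\qquad \lim_{s\to+\infty}su''(s)=0.$$ Let $\delta>0$ be fixed. Then there exists $\bar s=\bar s(\delta,f,A)>0$ such that for all $s>\bar s$ both $\lambda(D^2u)$ and $(a_1u'+(2a_n+\delta)su'',a_2u',\dots,a_nu')$ lie in $\Gamma$ and $$f(\lambda(D^2u))\geq f\big(a_1u'+(2a_n+\delta)su'',\,a_2u',\dots,a_nu'\big).$$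
   Context: $\lambda(M)$ denotes the eigenvalues of a real symmetric matrix $M$ and $\lambda(A)=(a_1,\dots,a_n)$. $D^2u$ is the Hessian of $x\mapsto u(\frac12x^TAx)$; the derivatives $u',u''$ are evaluated at $s=\frac12x^TAx$. *)

theory Defs
  imports "HOL-Analysis.Analysis" "HOL-Computational_Algebra.Polynomial" "HOL-Library.Multiset"
begin

definition charpoly :: "real^'n^'n \<Rightarrow> real poly" where
  "charpoly M = det (\<chi> i j. (if i = j then [:0, 1:] else 0) - [: M $ i $ j :])"

text \<open>lambda(M): the eigenvalues of M (roots of the characteristic polynomial,
  counted with multiplicity), listed in increasing order w.r.t. the order of the index type.\<close>
definition eigvals :: "real^('n::{finite,linorder})^('n::{finite,linorder}) \<Rightarrow> real^('n::{finite,linorder})" where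
  "eigvals M = (SOME v. (\<forall>i j. i \<le> j \<longrightarrow> v $ i \<le> v $ j) \<and>
                        (\<Sum>i\<in>UNIV. {# v $ i #}) = proots (charpoly M))"

definition hessian :: "(real^'n \<Rightarrow> real) \<Rightarrow> real^'n \<Rightarrow> real^'n^'n" where
  "hessian g x = (\<chi> i j. frechet_derivative
        (\<lambda>y. frechet_derivative g (at y) (axis j 1)) (at x) (axis i 1))"

coinductive smooth_on :: "(real^'n) set \<Rightarrow> (real^'n \<Rightarrow> real) \<Rightarrow> bool" for S where
  "\<lbrakk> \<forall>x\<in>S. g differentiable (at x);
     \<forall>i. smooth_on S (\<lambda>x. frechet_derivative g (at x) (axis i 1)) \<rbrakk> \<Longrightarrow> smooth_on S g"

definition diag_mat :: "real^'n \<Rightarrow> real^'n^'n" where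
  "diag_mat a = (\<chi> i j. if i = j then a $ i else 0)"

end

theory Submission
  imports Defs
begin

lemma sym_inner:
  fixes M :: "real^'n^'n"
  assumes "transpose M = M"
  shows "(M *v x) \<bullet> y = x \<bullet> (M *v y)"
proof -
  have "(M *v x) \<bullet> y = (\<Sum>i\<in>UNIV. (\<Sum>j\<in>UNIV. M$i$j * x$j) * y$i)"
    by (simp add: inner_vec_def matrix_vector_mult_def)
  also have "\<dots> = (\<Sum>j\<in>UNIV. \<Sum>i\<in>UNIV. M$i$j * x$j * y$i)"
    by (simp only: sum_distrib_right) (rule sum.swap)
  also have "\<dots> = (\<Sum>j\<in>UNIV. x$j * (\<Sum>i\<in>UNIV. M$j$i * y$i))"
  proof -
    have "M$i$j = M$j$i" for i j using arg_cong[OF assms, of "\<lambda>A. A$i$j"]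
      by (simp add: transpose_def)
    then show ?thesis by (simp add: sum_distrib_left mult_ac)
  qed
  also have "\<dots> = x \<bullet> (M *v y)"
    by (simp add: inner_vec_def matrix_vector_mult_def)
  finally show ?thesis .
qed

lemma quad_zero:
  fixes c d :: real
  assumes "\<And>t. t > 0 \<Longrightarrow> 2 * t * c \<le> t^2 * d" and "c \<ge> 0"
  shows "c = 0"
proof (rule ccontr)
  assume "c \<noteq> 0"
  hence cp: "c > 0" using assms by simp
  define t where "t = c / (\<bar>d\<bar> + 1)"
  have tp: "t > 0" using cp by (simp add: t_def)
  have "2 * t * c \<le> t^2 * d" using assms tp by simp
  hence "2 * c \<le> t * d" using tp by (simp add: power2_eq_square)
  also have "t * d \<le> t * \<bar>d\<bar>" using tp by (simp add: mult_left_mono)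
  also have "t * \<bar>d\<bar> < c" unfolding t_def using cp
    by (simp add: field_simps)
  finally show False using cp by simp
qed

lemma eig_exists:
  fixes M :: "real^'n^'n"
  assumes sym: "transpose M = M" and S: "subspace S" and inv: "\<forall>x\<in>S. M *v x \<in> S"
    and nz: "x0 \<in> S" "x0 \<noteq> 0"
  shows "\<exists>v\<in>S. norm v = 1 \<and> M *v v = (v \<bullet> (M *v v)) *\<^sub>R v"
proof -
  let ?q = "\<lambda>x. x \<bullet> (M *v x)"
  let ?K = "S \<inter> sphere 0 1"
  have "compact ?K"
    using compact_Int_closed[OF compact_sphere closed_subspace[OF S]] by (simp add: Int_commute)
  moreover have "?K \<noteq> {}"
  proof -
    have "(1 / norm x0) *\<^sub>R x0 \<in> ?K" using nz S by (simp add: subspace_scale)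
    thus ?thesis by blast
  qed
  moreover have "continuous_on ?K ?q"
    by (intro continuous_on_inner continuous_on_id linear_continuous_on matrix_vector_mul_bounded_linear)

  ultimately obtain v where v: "v \<in> ?K" "\<forall>y\<in>?K. ?q y \<le> ?q v"
    using continuous_attains_sup by blast
  have vS: "v \<in> S" and vn: "norm v = 1" using v(1) by auto
  define l where "l = ?q v"
  have qle: "?q z \<le> l * (z \<bullet> z)" if zS: "z \<in> S" for z
  proof (cases "z = 0")
    case True then show ?thesis by simp
  next
    case False
    let ?y = "(1 / norm z) *\<^sub>R z"
    have "?y \<in> ?K" using zS False S by (simp add: subspace_scale)
    hence "?q ?y \<le> l" using v(2) l_def by blast
    moreover have "?q ?y = ?q z / (norm z)^2"
      by (simp only: matrix_vector_mult_scaleR inner_scaleR_left inner_scaleR_right) (simp add: power2_eq_square)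
    moreover have "z \<bullet> z = (norm z)^2" by (simp add: power2_norm_eq_inner)
    ultimately have "?q z / (norm z)^2 \<le> l" "(norm z)^2 > 0" "z \<bullet> z = (norm z)^2" using False by auto
    thus ?thesis by (simp add: divide_le_eq mult.commute)
  qed
  define w where "w = M *v v - l *\<^sub>R v"
  have wS: "w \<in> S" unfolding w_def using inv vS S by (simp add: subspace_diff subspace_scale)
  have vv: "v \<bullet> v = 1" using vn by (simp add: norm_eq_1)
  have vw: "v \<bullet> w = 0" unfolding w_def l_def by (simp add: inner_diff_right vv)
  have wMv: "w \<bullet> (M *v v) = w \<bullet> w"
  proof -
    have "M *v v = w + l *\<^sub>R v" by (simp add: w_def)
    thus ?thesis by (simp add: inner_add_right vw inner_commute)
  qed
  have key: "2 * t * (w \<bullet> w) \<le> t^2 * (l * (w \<bullet> w) - ?q w)" if "t > 0" for t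
  proof -
    have "v + t *\<^sub>R w \<in> S" using vS wS S by (simp add: subspace_add subspace_scale)
    hence "?q (v + t *\<^sub>R w) \<le> l * ((v + t *\<^sub>R w) \<bullet> (v + t *\<^sub>R w))" by (rule qle)
    moreover have "?q (v + t *\<^sub>R w) = l + 2 * t * (w \<bullet> w) + t^2 * ?q w"
    proof -
      have "v \<bullet> (M *v w) = w \<bullet> (M *v v)" using sym_inner[OF sym, of w v] by (simp add: inner_commute)
      thus ?thesis
        by (simp add: matrix_vector_right_distrib matrix_vector_mult_scaleR inner_add_left inner_add_right
            l_def wMv power2_eq_square algebra_simps)
    qed
    moreover have "(v + t *\<^sub>R w) \<bullet> (v + t *\<^sub>R w) = 1 + t^2 * (w \<bullet> w)"
      by (simp add: inner_add_left inner_add_right vv vw inner_commute power2_eq_square)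
    ultimately have "l + 2 * t * (w \<bullet> w) + t^2 * ?q w \<le> l * (1 + t^2 * (w \<bullet> w))" by simp
    thus ?thesis by (simp add: algebra_simps)
  qed
  have "w \<bullet> w = 0" using quad_zero[of "w \<bullet> w", OF key] by simp
  hence "w = 0" by simp
  hence "M *v v = l *\<^sub>R v" by (simp add: w_def)
  thus ?thesis using vS vn l_def by blast
qed
definition eigsys :: "real^'n^'n \<Rightarrow> (real^'n) set \<Rightarrow> bool" where
  "eigsys M B \<longleftrightarrow> finite B \<and> (\<forall>b\<in>B. norm b = 1 \<and> M *v b = (b \<bullet> (M *v b)) *\<^sub>R b)
     \<and> (\<forall>b\<in>B. \<forall>c\<in>B. b \<noteq> c \<longrightarrow> b \<bullet> c = 0)"

lemma eig_basis:
  fixes M :: "real^'n^'n"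
  assumes sym: "transpose M = M"
  shows "subspace S \<Longrightarrow> (\<forall>x\<in>S. M *v x \<in> S) \<Longrightarrow> \<exists>B. B \<subseteq> S \<and> eigsys M B \<and> card B = dim S"
proof (induct "dim S" arbitrary: S rule: less_induct)
  case less
  show ?case
  proof (cases "dim S = 0")
    case True
    then show ?thesis by (intro exI[of _ "{}"]) (simp add: eigsys_def)
  next
    case False
    then obtain x0 where x0: "x0 \<in> S" "x0 \<noteq> 0" by auto
    obtain v where v: "v \<in> S" "norm v = 1" "M *v v = (v \<bullet> (M *v v)) *\<^sub>R v"
      using eig_exists[OF sym less(2) less(3) x0] by blast
    define S' where "S' = {x\<in>S. v \<bullet> x = 0}"
    have sub': "subspace S'" unfolding S'_def using less(2)
      by (auto simp: subspace_def inner_add_right)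
    have inv': "\<forall>x\<in>S'. M *v x \<in> S'"
    proof
      fix x assume x: "x \<in> S'"
      have "v \<bullet> (M *v x) = (M *v v) \<bullet> x" using sym_inner[OF sym, of v x] by simp
      also have "\<dots> = 0" using x by (subst v(3)) (simp add: S'_def)
      finally show "M *v x \<in> S'" using x less(3) by (simp add: S'_def)
    qed
    have vv: "v \<bullet> v = 1" using v(2) by (simp add: norm_eq_1)
    have vnot: "v \<notin> S'" using vv by (simp add: S'_def)
    have "S' \<subseteq> S" by (auto simp: S'_def)
    have "span S' \<subset> span S"
    proof -
      have e1: "span S' = S'" using sub' by (simp add: span_eq_iff)
      have e2: "span S = S" using less(2) by (simp add: span_eq_iff)
      show ?thesis unfolding e1 e2 using vnot v(1) \<open>S' \<subseteq> S\<close> by auto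
    qed
    hence lt: "dim S' < dim S" by (rule dim_psubset)
    have "S \<subseteq> span (insert v S')"
    proof
      fix x assume x: "x \<in> S"
      have "x - (v \<bullet> x) *\<^sub>R v \<in> S'" using x v(1) less(2) vv
        by (simp add: S'_def subspace_diff subspace_scale inner_diff_right)
      hence "x - (v \<bullet> x) *\<^sub>R v \<in> span (insert v S')" by (meson span_base span_mono subset_insertI subsetD)
      moreover have "(v \<bullet> x) *\<^sub>R v \<in> span (insert v S')" by (simp add: span_base span_mul)
      ultimately have "x - (v \<bullet> x) *\<^sub>R v + (v \<bullet> x) *\<^sub>R v \<in> span (insert v S')" by (rule span_add)
      thus "x \<in> span (insert v S')" by simp
    qed
    hence "dim S \<le> dim (insert v S')" by (metis dim_span dim_subset)
    also have "\<dots> \<le> dim S' + 1" by (simp add: dim_insert)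
    finally have le: "dim S \<le> dim S' + 1" .
    obtain B' where B': "B' \<subseteq> S'" "eigsys M B'" "card B' = dim S'"
      using less(1)[OF lt sub' inv'] by blast
    have "v \<notin> B'" using B'(1) vnot by blast
    have "insert v B' \<subseteq> S" using B'(1) v(1) \<open>S' \<subseteq> S\<close> by auto
    moreover have "eigsys M (insert v B')"
      using B' v unfolding eigsys_def
      by (auto simp: S'_def inner_commute subset_iff)
    moreover have "card (insert v B') = dim S"
      using B' \<open>v \<notin> B'\<close> lt le unfolding eigsys_def by simp
    ultimately show ?thesis by blast
  qed
qed

lemma spectral:
  fixes M :: "real^'n^'n"
  assumes sym: "transpose M = M"
  obtains q :: "'n \<Rightarrow> real^'n" and lam :: "'n \<Rightarrow> real" where
    "\<And>j k. q j \<bullet> q k = (if j = k then 1 else 0)" "\<And>j. M *v q j = lam j *\<^sub>R q j"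
proof -
  obtain B where B: "eigsys M B" "card B = dim (UNIV :: (real^'n) set)"
    using eig_basis[OF sym, of UNIV] by auto
  have "card B = CARD('n)" using B(2) by simp
  moreover have "finite B" using B(1) by (simp add: eigsys_def)
  ultimately obtain h where h: "bij_betw h (UNIV :: 'n set) B"
    using finite_same_card_bij[of "UNIV :: 'n set" B] by auto
  have hB: "h j \<in> B" for j using h by (auto simp: bij_betw_def)
  have hinj: "h j = h k \<Longrightarrow> j = k" for j k using h by (auto simp: bij_betw_def inj_on_def)
  show ?thesis
  proof
    fix j k
    show "h j \<bullet> h k = (if j = k then 1 else 0)"
      using B(1) hB[of j] hB[of k] hinj[of j k] unfolding eigsys_def
      by (auto simp: norm_eq_1)
  next
    fix j
    show "M *v h j = (h j \<bullet> (M *v h j)) *\<^sub>R h j" using B(1) hB[of j] unfolding eigsys_def by auto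
  qed
qed
lemma poly_det: "poly (det (A :: real poly^'n^'n)) t = det (\<chi> i j. poly (A$i$j) t)"
  unfolding det_def by (simp add: poly_sum poly_prod of_int_poly)

lemma poly_charpoly: "poly (charpoly M) t = det (mat t - M)"
  unfolding charpoly_def poly_det
  by (rule arg_cong[where f=det]) (simp add: vec_eq_iff mat_def)

lemma tPXP: "(transpose P ** X ** P) $ j $ k = (column j P) \<bullet> (X *v column k P)"
  for P X :: "real^'n^'n"
proof -
  have "(transpose P ** X ** P) $ j $ k = (\<Sum>l\<in>UNIV. \<Sum>i\<in>UNIV. P$i$j * X$i$l * P$l$k)"
    by (simp add: matrix_matrix_mult_def transpose_def sum_distrib_right)
  also have "\<dots> = (\<Sum>i\<in>UNIV. \<Sum>l\<in>UNIV. P$i$j * X$i$l * P$l$k)" by (rule sum.swap)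
  also have "\<dots> = (column j P) \<bullet> (X *v column k P)"
    by (simp add: matrix_vector_mult_def inner_vec_def column_def sum_distrib_left mult_ac)
  finally show ?thesis .
qed

lemma PyXPz: "(P *v y) \<bullet> (X *v (P *v z)) = y \<bullet> ((transpose P ** X ** P) *v z)"
  for P X :: "real^'n^'n"
proof -
  have "(P *v y) \<bullet> (X *v (P *v z)) = y \<bullet> (transpose P *v (X *v (P *v z)))"
    by (metis dot_lmul_matrix vector_transpose_matrix)
  also have "\<dots> = y \<bullet> ((transpose P ** X ** P) *v z)" by (simp add: matrix_vector_mul_assoc matrix_mul_assoc)
  finally show ?thesis .
qed

lemma diag_facts:
  fixes M :: "real^'n^'n"
  assumes sym: "transpose M = M"
  obtains lam :: "'n \<Rightarrow> real" and P :: "real^'n^'n" where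
    "proots (charpoly M) = (\<Sum>j\<in>UNIV. {# lam j #})"
    "(\<Sum>j\<in>UNIV. lam j) = trace M"
    "\<And>y. (P *v y) \<bullet> (M *v (P *v y)) = (\<Sum>j\<in>UNIV. lam j * (y$j)^2)"
    "\<And>y. (P *v y) \<bullet> (P *v y) = y \<bullet> y"
    "transpose P ** P = mat 1"
proof -
  obtain q :: "'n \<Rightarrow> real^'n" and lam :: "'n \<Rightarrow> real" where q: "\<And>j k. q j \<bullet> q k = (if j = k then 1 else 0)" and ev: "\<And>j. M *v q j = lam j *\<^sub>R q j"
    using spectral[OF sym] by blast
  define P :: "real^'n^'n" where "P = (\<chi> i j. q j $ i)"
  have col: "column j P = q j" for j by (simp add: P_def column_def vec_eq_iff)
  have PP: "transpose P ** P = mat 1"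
  proof -
    have "(transpose P ** mat 1 ** P)$j$k = (mat 1::real^'n^'n)$j$k" for j k
      by (simp only: tPXP matrix_vector_mul_lid) (simp add: col q mat_def)
    thus ?thesis by (simp add: vec_eq_iff)
  qed
  have PMP: "transpose P ** M ** P = diag_mat (\<chi> j. lam j)"
    by (simp add: vec_eq_iff tPXP col q ev diag_mat_def)
  have PtP: "transpose P ** (mat t - M) ** P = diag_mat (\<chi> j. t - lam j)" for t
  proof -
    have mt: "mat t *v x = t *\<^sub>R x" for x :: "real^'n"
      by (simp add: vec_eq_iff matrix_vector_mult_def mat_def if_distrib[of "\<lambda>a. a * _"] cong: if_cong)
    have mq: "(mat t - M) *v q k = (t - lam k) *\<^sub>R q k" for k
      by (simp add: ev matrix_vector_mult_diff_rdistrib mt algebra_simps)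
    show ?thesis by (simp add: vec_eq_iff tPXP col q diag_mat_def mq)
  qed
  have detP: "det P * det P = 1"
  proof -
    have "det (transpose P ** P) = 1" using PP by simp
    thus ?thesis by (simp add: det_mul det_transpose)
  qed
  have detsub: "det (mat t - M) = (\<Prod>j\<in>UNIV. t - lam j)" for t
  proof -
    have "det (transpose P ** (mat t - M) ** P) = (\<Prod>j\<in>UNIV. t - lam j)"
      unfolding PtP by (subst det_diagonal) (auto simp: diag_mat_def)
    moreover have "det (transpose P ** (mat t - M) ** P) = det (mat t - M) * (det P * det P)"
      by (simp add: det_mul det_transpose mult_ac)
    ultimately show ?thesis using detP by simp
  qed
  have cp: "charpoly M = (\<Prod>j\<in>UNIV. [:- lam j, 1:])"
    by (rule poly_eq_poly_eq_iff[THEN iffD1]) (simp add: fun_eq_iff poly_charpoly detsub poly_prod)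
  show ?thesis
  proof
    show "proots (charpoly M) = (\<Sum>j\<in>UNIV. {# lam j #})"
      unfolding cp by (subst proots_prod) auto
  next
    have "trace (transpose P ** M ** P) = trace M"
    proof -
      have "orthogonal_matrix P" using PP by (simp add: orthogonal_matrix)
      hence "P ** transpose P = mat 1" by (simp add: orthogonal_matrix_def)
      thus ?thesis
        by (metis matrix_mul_assoc matrix_mul_rid trace_mul_sym)
    qed
    moreover have "trace (transpose P ** M ** P) = (\<Sum>j\<in>UNIV. lam j)"
      unfolding PMP by (simp add: trace_def diag_mat_def)
    ultimately show "(\<Sum>j\<in>UNIV. lam j) = trace M" by simp
  next
    fix y
    show "(P *v y) \<bullet> (M *v (P *v y)) = (\<Sum>j\<in>UNIV. lam j * (y$j)^2)"
      unfolding PyXPz PMP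
      by (simp add: inner_vec_def matrix_vector_mult_def diag_mat_def if_distrib[of "\<lambda>a. a * _"]
          if_distrib[of "\<lambda>a. _ * a"] power2_eq_square mult_ac cong: if_cong)
  next
    fix y
    show "(P *v y) \<bullet> (P *v y) = y \<bullet> y"
      using PyXPz[of P y "mat 1" y] PP by simp
  next
    show "transpose P ** P = mat 1" by (rule PP)
  qed
qed
lemma ms_img: "finite A \<Longrightarrow> (\<Sum>i\<in>A. {# f i #}) = image_mset f (mset_set A)"
  by (induct A rule: finite_induct) auto

lemma ms_sum: "finite A \<Longrightarrow> sum_mset (\<Sum>i\<in>A. {# f i #}) = (\<Sum>i\<in>A. f i)"
  by (induct A rule: finite_induct) auto

lemma ms_card: "finite A \<Longrightarrow> size (filter_mset P (\<Sum>i\<in>A. {# f i #})) = card {i\<in>A. P (f i)}"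
proof (induct A rule: finite_induct)
  case empty then show ?case by simp
next
  case (insert x F)
  have "{i\<in>insert x F. P (f i)} = (if P (f x) then insert x {i\<in>F. P (f i)} else {i\<in>F. P (f i)})"
    by auto
  then show ?case using insert by auto
qed

lemma sorted_exists:
  fixes lam :: "'n::{finite,linorder} \<Rightarrow> real"
  shows "\<exists>v::real^('n::{finite,linorder}). (\<forall>i j. i \<le> j \<longrightarrow> v$i \<le> v$j) \<and> (\<Sum>i\<in>UNIV. {# v$i #}) = (\<Sum>j\<in>UNIV. {# lam j #})"
proof -
  define xs where "xs = sorted_list_of_set (UNIV :: 'n set)"
  define ys where "ys = sort (map lam xs)"
  have lxs: "length xs = CARD('n)" by (simp add: xs_def)
  have lys: "length ys = CARD('n)" by (simp add: ys_def lxs)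
  have sys: "sorted ys" by (simp add: ys_def)
  define idx :: "'n \<Rightarrow> nat" where "idx i = card {j. j < i}" for i
  have idx_lt: "idx i < CARD('n)" for i
    unfolding idx_def by (rule psubset_card_mono) auto
  have mono: "idx i \<le> idx j" if "i \<le> j" for i j
    unfolding idx_def using that by (intro card_mono) auto
  have smono: "idx i < idx j" if "i < j" for i j
    unfolding idx_def using that by (intro psubset_card_mono) auto
  have inj: "inj idx"
    by (metis inj_def less_irrefl neqE smono)
  have bij: "bij_betw idx (UNIV :: 'n set) {..<CARD('n)}"
  proof -
    have "idx ` UNIV \<subseteq> {..<CARD('n)}" using idx_lt by auto
    moreover have "card (idx ` UNIV) = card {..<CARD('n)}" using inj by (simp add: card_image)
    ultimately have "idx ` UNIV = {..<CARD('n)}" by (intro card_subset_eq) auto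
    thus ?thesis using inj by (simp add: bij_betw_def)
  qed
  define v :: "real^('n::{finite,linorder})" where "v = (\<chi> i. ys ! (idx i))"
  have "v$i \<le> v$j" if "i \<le> j" for i j
    unfolding v_def using mono[OF that] idx_lt[of j] lys sys by (simp add: sorted_nth_mono)
  moreover have "(\<Sum>i\<in>UNIV. {# v$i #}) = (\<Sum>j\<in>UNIV. {# lam j #})"
  proof -
    have "(\<Sum>i\<in>UNIV. {# v$i #}) = (\<Sum>p\<in>{..<CARD('n)}. {# ys ! p #})"
      unfolding v_def using sum.reindex_bij_betw[OF bij, of "\<lambda>p. {# ys ! p #}"] by simp
    also have "\<dots> = mset ys"
    proof -
      have "mset ys = mset (map (nth ys) [0..<length ys])" by (simp add: map_nth)
      also have "\<dots> = image_mset (nth ys) (mset_set {..<CARD('n)})"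
        by (simp add: lys mset_upt atLeast0LessThan)
      finally show ?thesis by (simp add: ms_img)
    qed
    also have "\<dots> = image_mset lam (mset xs)" by (simp add: ys_def)
    also have "\<dots> = (\<Sum>j\<in>UNIV. {# lam j #})"
      by (simp add: ms_img xs_def flip: sorted_list_of_mset_set)
    finally show ?thesis .
  qed
  ultimately show ?thesis by blast
qed

lemma eig_bound:
  fixes M :: "real^('n::{finite,linorder})^('n::{finite,linorder})" and al :: "real^('n::{finite,linorder})"
  assumes sym: "transpose M = M"
    and als: "\<forall>i j. i \<le> j \<longrightarrow> al$i \<le> al$j"
    and quad: "\<forall>w. w \<bullet> (M *v w) \<le> (\<Sum>i\<in>UNIV. al$i * (w$i)^2)"
  shows "(\<forall>i j. i \<le> j \<longrightarrow> eigvals M $ i \<le> eigvals M $ j) \<and> (\<forall>i. eigvals M $ i \<le> al$i)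
         \<and> (\<Sum>i\<in>UNIV. eigvals M $ i) = trace M"
proof -
  obtain lam :: "('n::{finite,linorder}) \<Rightarrow> real" and P :: "real^('n::{finite,linorder})^('n::{finite,linorder})" where
    D: "proots (charpoly M) = (\<Sum>j\<in>UNIV. {# lam j #})"
    "(\<Sum>j\<in>UNIV. lam j) = trace M"
    "\<And>y. (P *v y) \<bullet> (M *v (P *v y)) = (\<Sum>j\<in>UNIV. lam j * (y$j)^2)"
    "\<And>y. (P *v y) \<bullet> (P *v y) = y \<bullet> y"
    "transpose P ** P = mat 1"
    using diag_facts[OF sym] by blast
  define L where "L = eigvals M"
  have LP: "(\<forall>i j. i \<le> j \<longrightarrow> L$i \<le> L$j) \<and> (\<Sum>i\<in>UNIV. {# L$i #}) = proots (charpoly M)"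
    unfolding L_def eigvals_def D(1) by (rule someI_ex) (rule sorted_exists)
  hence Ls: "\<And>i j. i \<le> j \<Longrightarrow> L$i \<le> L$j" and Lm: "(\<Sum>i\<in>UNIV. {# L$i #}) = (\<Sum>j\<in>UNIV. {# lam j #})"
    using D(1) by auto
  have tr: "(\<Sum>i\<in>UNIV. L$i) = trace M"
    using arg_cong[OF Lm, of sum_mset] D(2) by (simp add: ms_sum)
  have bound: "L$k \<le> al$k" for k
  proof (rule ccontr)
    assume "\<not> L$k \<le> al$k"
    hence ck: "al$k < L$k" by simp
    define c where "c = L$k"
    define J where "J = {j. c \<le> lam j}"
    define K where "K = {i. i \<le> k}"
    have cardJ: "card J = card {i. c \<le> L$i}"
      using arg_cong[OF Lm, of "\<lambda>m. size (filter_mset (\<lambda>x. c \<le> x) m)"]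
      by (simp add: ms_card J_def)
    have "{i. k \<le> i} \<subseteq> {i. c \<le> L$i}" using Ls by (auto simp: c_def)
    hence c1: "card {i. k \<le> i} \<le> card J" unfolding cardJ by (intro card_mono) auto
    have "card {i. k \<le> i} + card K = card ({i. k \<le> i} \<union> K) + card ({i. k \<le> i} \<inter> K)"
      by (rule card_Un_Int) auto
    also have "{i. k \<le> i} \<union> K = UNIV" by (auto simp: K_def)
    also have "{i. k \<le> i} \<inter> K = {k}" by (auto simp: K_def)
    finally have c2: "CARD('n::{finite,linorder}) + 1 \<le> card J + card K" using c1 by simp
    define Y where "Y = {y::real^('n::{finite,linorder}). \<forall>j. j \<notin> J \<longrightarrow> y$j = 0}"
    define S where "S = (\<lambda>y. P *v y) ` Y"
    define T where "T = {w::real^('n::{finite,linorder}). \<forall>i. i \<notin> K \<longrightarrow> w$i = 0}"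
    have subY: "subspace Y" by (auto simp: subspace_def Y_def)
    have subT: "subspace T" by (auto simp: subspace_def T_def)
    have subS: "subspace S" unfolding S_def
      by (rule linear_subspace_image[OF matrix_vector_mul_linear subY])
    have injP: "inj ((*v) P)"
    proof (rule injI)
      fix x y assume "P *v x = P *v y"
      hence "transpose P *v (P *v x) = transpose P *v (P *v y)" by simp
      thus "x = y" by (simp add: matrix_vector_mul_assoc D(5))
    qed
    have dY: "dim Y = card J" using dim_substandard_cart[where 'a=real and d=J] dim_vec_eq[of Y] by (simp add: Y_def)
    have dT: "dim T = card K" using dim_substandard_cart[where 'a=real and d=K] dim_vec_eq[of T] by (simp add: T_def)
    have dS: "dim S = card J" unfolding S_def dY[symmetric]
      by (rule dim_image_eq[OF matrix_vector_mul_linear]) (meson injP inj_on_subset subset_UNIV)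
    have "dim {x + y |x y. x \<in> S \<and> y \<in> T} + dim (S \<inter> T) = dim S + dim T"
      by (rule dim_sums_Int[OF subS subT])
    moreover have "dim {x + y |x y. x \<in> S \<and> y \<in> T} \<le> CARD('n::{finite,linorder})" by (rule dim_subset_UNIV_cart)
    ultimately have "dim (S \<inter> T) \<noteq> 0" using c2 dS dT by linarith
    then obtain w where w: "w \<in> S" "w \<in> T" "w \<noteq> 0" by (auto simp: subset_iff)
    then obtain y where y: "y \<in> Y" "w = P *v y" by (auto simp: S_def)
    have wpos: "w \<bullet> w > 0" using w(3) by simp
    have "c * (w \<bullet> w) = (\<Sum>j\<in>UNIV. c * (y$j)^2)"
      using D(4)[of y] by (simp add: y(2) inner_vec_def sum_distrib_left power2_eq_square)
    also have "\<dots> \<le> (\<Sum>j\<in>UNIV. lam j * (y$j)^2)"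
    proof (rule sum_mono)
      fix j show "c * (y$j)^2 \<le> lam j * (y$j)^2"
        using y(1) by (cases "j \<in> J") (auto simp: Y_def J_def intro: mult_right_mono)
    qed
    also have "\<dots> = w \<bullet> (M *v w)" using D(3)[of y] y(2) by simp
    also have "\<dots> \<le> (\<Sum>i\<in>UNIV. al$i * (w$i)^2)" using quad by blast
    also have "\<dots> \<le> (\<Sum>i\<in>UNIV. al$k * (w$i)^2)"
    proof (rule sum_mono)
      fix i show "al$i * (w$i)^2 \<le> al$k * (w$i)^2"
        using w(2) als by (cases "i \<in> K") (auto simp: T_def K_def intro: mult_right_mono)
    qed
    also have "\<dots> = al$k * (w \<bullet> w)"
      by (simp add: inner_vec_def sum_distrib_left power2_eq_square)
    finally have "c \<le> al$k" using wpos by (simp add: mult_le_cancel_right)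
    thus False using ck c_def by simp
  qed
  show ?thesis using Ls bound tr unfolding L_def by blast
qed
lemma diag_mv: "diag_mat a *v y = (\<chi> i. a$i * y$i)"
  by (simp add: diag_mat_def matrix_vector_mult_def vec_eq_iff if_distrib[of "\<lambda>z. z * _"] cong: if_cong)

lemma Q_deriv:
  fixes a :: "real^'n"
  shows "((\<lambda>y. (1/2) * (y \<bullet> (diag_mat a *v y))) has_derivative (\<lambda>h. (diag_mat a *v y) \<bullet> h)) (at y)"
proof -
  have lin: "bounded_linear ((*v) (diag_mat a))" by simp
  have "((\<lambda>y. y \<bullet> (diag_mat a *v y)) has_derivative (\<lambda>h. y \<bullet> (diag_mat a *v h) + h \<bullet> (diag_mat a *v y))) (at y)"
    by (rule has_derivative_inner[OF has_derivative_ident bounded_linear.has_derivative[OF lin has_derivative_ident]])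
  hence "((\<lambda>y. (1/2) * (y \<bullet> (diag_mat a *v y))) has_derivative (\<lambda>h. (1/2) * (y \<bullet> (diag_mat a *v h) + h \<bullet> (diag_mat a *v y)))) (at y)"
    by (rule has_derivative_mult_right)
  moreover have "(\<lambda>h. (1/2) * (y \<bullet> (diag_mat a *v h) + h \<bullet> (diag_mat a *v y))) = (\<lambda>h. (diag_mat a *v y) \<bullet> h)"
    by (auto simp: fun_eq_iff diag_mv inner_vec_def algebra_simps)
  ultimately show ?thesis by simp
qed

lemma hess:
  fixes a :: "real^'n" and u u' u'' :: "real \<Rightarrow> real"
  assumes u_deriv: "\<forall>s>0. (u has_real_derivative u' s) (at s)"
    and u'_deriv: "\<forall>s>0. (u' has_real_derivative u'' s) (at s)"
    and xpos: "(1/2) * (x \<bullet> (diag_mat a *v x)) > 0"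
  shows "hessian (\<lambda>y. u ((1/2) * (y \<bullet> (diag_mat a *v y)))) x =
    (\<chi> i j. u' ((1/2) * (x \<bullet> (diag_mat a *v x))) * (if i = j then a$i else 0)
       + u'' ((1/2) * (x \<bullet> (diag_mat a *v x))) * (a$i * x$i) * (a$j * x$j))"
proof -
  define Q where "Q y = (1/2) * (y \<bullet> (diag_mat a *v y))" for y :: "real^'n"
  define U where "U = {y. Q y > 0}"
  have Qd: "(Q has_derivative (\<lambda>h. (diag_mat a *v y) \<bullet> h)) (at y)" for y
    unfolding Q_def by (rule Q_deriv)
  have "continuous_on UNIV Q"
    by (metis Qd differentiable_def differentiable_imp_continuous_on differentiable_on_def)
  hence oU: "open U" unfolding U_def by (simp add: open_Collect_less continuous_on_const)
  have xU: "x \<in> U" using xpos by (simp add: U_def Q_def)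
  have gd: "((\<lambda>y. u (Q y)) has_derivative (\<lambda>h. ((diag_mat a *v y) \<bullet> h) * u' (Q y))) (at y)" if "y \<in> U" for y
    using DERIV_compose_FDERIV[OF u_deriv[rule_format] Qd] that by (simp add: U_def)
  have grad: "frechet_derivative (\<lambda>y. u (Q y)) (at y) (axis j 1) = a$j * y$j * u' (Q y)" if "y \<in> U" for y j
    unfolding frechet_derivative_at[OF gd[OF that], symmetric] by (simp add: diag_mv inner_axis)
  have Gd: "((\<lambda>y. a$j * y$j * u' (Q y)) has_derivative
      (\<lambda>h. a$j * x$j * (((diag_mat a *v x) \<bullet> h) * u'' (Q x)) + a$j * h$j * u' (Q x))) (at x)" for j
  proof -
    have d1: "((\<lambda>y. a$j * y$j) has_derivative (\<lambda>h. a$j * h$j)) (at x)"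
      by (intro has_derivative_mult_right bounded_linear.has_derivative[OF bounded_linear_vec_nth] has_derivative_ident)
    have d2: "((\<lambda>y. u' (Q y)) has_derivative (\<lambda>h. ((diag_mat a *v x) \<bullet> h) * u'' (Q x))) (at x)"
      using DERIV_compose_FDERIV[OF u'_deriv[rule_format] Qd] xU by (simp add: U_def)
    show ?thesis using has_derivative_mult[OF d1 d2] by simp
  qed
  have Hd: "((\<lambda>y. frechet_derivative (\<lambda>y. u (Q y)) (at y) (axis j 1)) has_derivative
      (\<lambda>h. a$j * x$j * (((diag_mat a *v x) \<bullet> h) * u'' (Q x)) + a$j * h$j * u' (Q x))) (at x)" for j
    by (rule has_derivative_transform_within_open[OF Gd oU xU]) (simp add: grad)
  have ax: "axis i (1::real) $ j = (if j = i then 1 else 0)" for i j by (simp add: axis_def)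
  have ent: "frechet_derivative (\<lambda>y. frechet_derivative (\<lambda>y. u (Q y)) (at y) (axis j 1)) (at x) (axis i 1)
     = u' (Q x) * (if i = j then a$i else 0) + u'' (Q x) * (a$i * x$i) * (a$j * x$j)" for i j
    unfolding frechet_derivative_at[OF Hd, symmetric]
    by (cases "i = j") (simp_all add: diag_mv inner_axis ax algebra_simps)
  show ?thesis
    unfolding hessian_def Q_def[symmetric] by (simp only: ent)
qed
lemma key_ineq:
  fixes e F :: "'n::finite \<Rightarrow> real"
  assumes e0: "\<forall>i. e i \<ge> 0" and eD: "(\<Sum>i\<in>UNIV. e i) = D"
    and D: "D \<le> 2 * an * g" and g0: "g \<ge> 0"
    and F1: "\<forall>i. F i - F i1 \<le> 2 * ep" and F1c: "F i1 \<ge> c0 - ep" and Fp: "F i1 > 0"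
    and ce: "\<delta> * c0 - ep * (\<delta> + 4 * an) \<ge> 0" and dp: "\<delta> > 0" and ep0: "ep \<ge> 0"
  shows "0 \<le> (\<Sum>i\<in>UNIV. ((if i = i1 then (2 * an + \<delta>) * g else 0) - e i) * F i)"
proof -
  have "(\<Sum>i\<in>UNIV. ((if i = i1 then (2 * an + \<delta>) * g else 0) - e i) * F i)
      = (2 * an + \<delta>) * g * F i1 - (\<Sum>i\<in>UNIV. e i * F i)"
    by (simp add: left_diff_distrib sum_subtractf if_distrib[of "\<lambda>z. z * _"] cong: if_cong)
  moreover have "(\<Sum>i\<in>UNIV. e i * F i) \<le> (\<Sum>i\<in>UNIV. e i * (F i1 + 2 * ep))"
    using e0 F1 by (intro sum_mono mult_left_mono) (auto simp: algebra_simps)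
  moreover have "(\<Sum>i\<in>UNIV. e i * (F i1 + 2 * ep)) = D * (F i1 + 2 * ep)"
    using eD by (simp add: sum_distrib_right[symmetric])
  moreover have "D * (F i1 + 2 * ep) \<le> D * F i1 + 2 * an * g * 2 * ep"
    using mult_right_mono[OF D ep0] by (simp add: algebra_simps)
  moreover have "D * F i1 \<le> 2 * an * g * F i1" using D Fp by (simp add: mult_right_mono)
  moreover have "\<delta> * g * (c0 - ep) \<le> \<delta> * g * F i1" using F1c dp g0 by (simp add: mult_left_mono)
  moreover have "0 \<le> g * (\<delta> * c0 - ep * (\<delta> + 4 * an))" using ce g0 by simp
  ultimately show ?thesis by (simp add: algebra_simps)
qed

lemma mvt_ineq:
  fixes f :: "real^'n \<Rightarrow> real"
  assumes fd: "\<forall>\<xi>\<in>B. (f has_derivative f' \<xi>) (at \<xi>)" and cB: "convex B" and VB: "V \<in> B" and LB: "L \<in> B"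
    and pos: "\<forall>\<xi>\<in>B. 0 \<le> (\<Sum>i\<in>UNIV. (L - V)$i * f' \<xi> (axis i 1))"
  shows "f V \<le> f L"
proof -
  define p where "p t = V + t *\<^sub>R (L - V)" for t :: real
  have pB: "p t \<in> B" if "0 \<le> t" "t \<le> 1" for t
  proof -
    have "p t = (1 - t) *\<^sub>R V + t *\<^sub>R L" by (simp add: p_def algebra_simps)
    thus ?thesis using convexD[OF cB VB LB, of "1 - t" t] that by simp
  qed
  have lin: "linear (f' \<xi>)" if "\<xi> \<in> B" for \<xi>
    using fd that has_derivative_bounded_linear bounded_linear.linear by blast
  have exp: "f' \<xi> (L - V) = (\<Sum>i\<in>UNIV. (L - V)$i * f' \<xi> (axis i 1))" if "\<xi> \<in> B" for \<xi>
  proof -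
    have "L - V = (\<Sum>i\<in>UNIV. (L - V)$i *\<^sub>R axis i 1)"
      using basis_expansion[of "L - V"] by (simp add: scalar_mult_eq_scaleR)
    hence "f' \<xi> (L - V) = f' \<xi> (\<Sum>i\<in>UNIV. (L - V)$i *\<^sub>R axis i 1)" by (rule arg_cong)
    also have "\<dots> = (\<Sum>i\<in>UNIV. (L - V)$i * f' \<xi> (axis i 1))"
      using lin[OF that] by (simp add: linear_sum linear_scale)
    finally show ?thesis .
  qed
  have pd: "(p has_derivative (\<lambda>t. t *\<^sub>R (L - V))) (at t)" for t
    unfolding p_def by (auto intro!: derivative_eq_intros)
  have hd: "DERIV (\<lambda>t. f (p t)) t :> f' (p t) (L - V)" if "0 \<le> t" "t \<le> 1" for t
  proof -
    have "((\<lambda>t. f (p t)) has_derivative (\<lambda>x. f' (p t) (x *\<^sub>R (L - V)))) (at t)"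
      using has_derivative_compose[OF pd fd[rule_format, OF pB[OF that]]] by (simp add: o_def)
    moreover have "(\<lambda>x. f' (p t) (x *\<^sub>R (L - V))) = (\<lambda>x. f' (p t) (L - V) * x)"
      using lin[OF pB[OF that]] by (simp add: fun_eq_iff linear_scale)
    ultimately show ?thesis by (simp add: has_field_derivative_def)
  qed
  obtain z where z: "0 < z" "z < 1" "f (p 1) - f (p 0) = (1 - 0) * f' (p z) (L - V)"
    using MVT2[of 0 1 "\<lambda>t. f (p t)" "\<lambda>t. f' (p t) (L - V)"] hd by auto
  have "0 \<le> f' (p z) (L - V)" using exp[OF pB] pos pB z by auto
  thus ?thesis using z(3) by (simp add: p_def)
qed
theorem lemma2p2:
  fixes \<Gamma> :: "(real^('n::{finite,linorder})) set"
    and f :: "real^('n::{finite,linorder}) \<Rightarrow> real"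
    and f' :: "real^('n::{finite,linorder}) \<Rightarrow> real^('n::{finite,linorder}) \<Rightarrow> real"
    and a :: "real^('n::{finite,linorder})"
    and u u' u'' :: "real \<Rightarrow> real"
    and \<delta> :: real
  assumes Gamma_open: "open \<Gamma>"
    and Gamma_convex: "convex \<Gamma>"
    and Gamma_proper: "\<Gamma> \<noteq> UNIV"
    and Gamma_cone: "\<forall>x\<in>\<Gamma>. \<forall>t>0. t *\<^sub>R x \<in> \<Gamma>"
    and Gamma_pos: "{x. \<forall>i. x $ i > 0} \<subseteq> \<Gamma>"
    and Gamma_sum: "\<Gamma> \<subseteq> {x. (\<Sum>i\<in>UNIV. x $ i) > 0}"
    and f_symm: "\<forall>x\<in>\<Gamma>. \<forall>\<sigma>. \<sigma> permutes (UNIV :: ('n::{finite,linorder}) set) \<longrightarrow>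
                    (\<chi> i. x $ \<sigma> i) \<in> \<Gamma> \<and> f (\<chi> i. x $ \<sigma> i) = f x"
    and f_smooth: "smooth_on \<Gamma> f"
    and f_deriv: "\<forall>x\<in>\<Gamma>. (f has_derivative f' x) (at x)"
    and f_incr: "\<forall>x\<in>\<Gamma>. \<forall>i. f' x (axis i 1) > 0"
    and a_pos: "\<forall>i. a $ i > 0"
    and a_sorted: "\<forall>i j. i \<le> j \<longrightarrow> a $ i \<le> a $ j"
    and f_max1: "\<forall>i. f' a (axis i 1) \<le> f' a (axis (Min UNIV) 1)"
    and u_deriv: "\<forall>s>0. (u has_real_derivative u' s) (at s)"
    and u'_deriv: "\<forall>s>0. (u' has_real_derivative u'' s) (at s)"
    and u'_pos: "\<forall>s>0. u' s > 0"
    and u''_nonpos: "\<forall>s>0. u'' s \<le> 0"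
    and u'_lim: "(u' \<longlongrightarrow> 1) at_top"
    and su''_lim: "((\<lambda>s. s * u'' s) \<longlongrightarrow> 0) at_top"
    and delta_pos: "\<delta> > 0"
  shows "\<exists>sbar>0. \<forall>x :: real^('n::{finite,linorder}).
           (1/2) * (x \<bullet> (diag_mat a *v x)) > sbar \<longrightarrow>
           (let s = (1/2) * (x \<bullet> (diag_mat a *v x));
                L = eigvals (hessian (\<lambda>y. u ((1/2) * (y \<bullet> (diag_mat a *v y)))) x);
                V = (\<chi> i. if i = Min UNIV
                           then a $ i * u' s + (2 * a $ Max UNIV + \<delta>) * s * u'' s
                           else a $ i * u' s)
            in L \<in> \<Gamma> \<and> V \<in> \<Gamma> \<and> f L \<ge> f V)"

proof -
  let ?N = "UNIV :: ('n::{finite,linorder}) set"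
  define i1 :: "'n::{finite,linorder}" where "i1 = Min UNIV"
  define an where "an = a $ Max ?N"
  have a_le_an: "a$i \<le> an" for i
    unfolding an_def using a_sorted by (simp add: Max_ge)
  have an_pos: "an > 0" using a_pos by (simp add: an_def)
  define nn where "nn = real CARD('n::{finite,linorder})"
  have nn1: "nn \<ge> 1" by (simp add: nn_def)
  define F where "F i \<xi> = f' \<xi> (axis i 1)" for i :: "'n::{finite,linorder}" and \<xi>
  have aG: "a \<in> \<Gamma>" using Gamma_pos a_pos by auto
  define c0 where "c0 = F i1 a"
  have c0p: "c0 > 0" using f_incr aG by (simp add: c0_def F_def)
  define ep where "ep = \<delta> * c0 / (\<delta> + 4 * an)"
  have ep0: "ep > 0" using delta_pos c0p an_pos by (simp add: ep_def)
  have ce: "\<delta> * c0 - ep * (\<delta> + 4 * an) = 0" using delta_pos an_pos by (simp add: ep_def)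
  define G where "G i \<xi> = frechet_derivative f (at \<xi>) (axis i 1)" for i :: "'n::{finite,linorder}" and \<xi>
  have GF: "G i \<xi> = F i \<xi>" if "\<xi> \<in> \<Gamma>" for i \<xi>
    unfolding G_def F_def using frechet_derivative_at[OF f_deriv[rule_format, OF that]] by simp
  have Gcont: "isCont (G i) a" for i
  proof -
    have "smooth_on \<Gamma> (G i)" using f_smooth unfolding G_def by (cases rule: smooth_on.cases) auto
    hence "G i differentiable (at a)" using aG by (cases rule: smooth_on.cases) auto
    thus ?thesis by (rule differentiable_imp_continuous_within)
  qed
  have "eventually (\<lambda>\<xi>. \<forall>i. dist (G i \<xi>) (G i a) < ep) (at a)"
    by (rule eventually_all_finite) (rule tendstoD[OF Gcont[unfolded continuous_at] ep0])
  then obtain d where d: "d > 0" "\<forall>\<xi>. \<xi> \<noteq> a \<and> dist \<xi> a < d \<longrightarrow> (\<forall>i. dist (G i \<xi>) (G i a) < ep)"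
    by (auto simp: eventually_at)
  obtain e where e: "e > 0" "ball a e \<subseteq> \<Gamma>" using Gamma_open aG open_contains_ball by blast
  define r where "r = min d e"
  have r0: "r > 0" using d e by (simp add: r_def)
  have rG: "ball a r \<subseteq> \<Gamma>" using e by (auto simp: r_def)
  have Fclose: "\<bar>F i \<xi> - F i a\<bar> < ep" if "\<xi> \<in> ball a r" for i \<xi>
  proof (cases "\<xi> = a")
    case True then show ?thesis using ep0 by simp
  next
    case False
    have "dist \<xi> a < d" using that by (simp add: r_def dist_commute)
    hence "dist (G i \<xi>) (G i a) < ep" using d False by blast
    moreover have "\<xi> \<in> \<Gamma>" using that rG by blast
    ultimately show ?thesis using GF aG by (simp add: dist_real_def)
  qed
  define \<eta>1 where "\<eta>1 = r / (2 * (nn * an + 1))"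
  define \<eta>2 where "\<eta>2 = r / (2 * (2 * an + \<delta> + 1))"
  have \<eta>1p: "\<eta>1 > 0" using r0 nn1 an_pos by (simp add: \<eta>1_def add_pos_pos)
  have \<eta>2p: "\<eta>2 > 0" using r0 delta_pos an_pos by (simp add: \<eta>2_def add_pos_pos)
  have "eventually (\<lambda>s. dist (u' s) 1 < \<eta>1 \<and> dist (s * u'' s) 0 < \<eta>2) at_top"
    using tendstoD[OF u'_lim \<eta>1p] tendstoD[OF su''_lim \<eta>2p] by (rule eventually_conj)
  then obtain N where N: "\<forall>s\<ge>N. \<bar>u' s - 1\<bar> < \<eta>1 \<and> \<bar>s * u'' s\<bar> < \<eta>2"
    by (auto simp: eventually_at_top_linorder dist_real_def)
  show ?thesis
  proof (intro exI[of _ "max N 1"] conjI allI impI)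
    show "max N 1 > 0" by simp
    fix x :: "real^('n::{finite,linorder})"
    assume hx: "(1/2) * (x \<bullet> (diag_mat a *v x)) > max N 1"
    define s where "s = (1/2) * (x \<bullet> (diag_mat a *v x))"
    have s0: "s > 0" and sN: "s \<ge> N" using hx by (auto simp: s_def)
    have u1: "\<bar>u' s - 1\<bar> < \<eta>1" and u2: "\<bar>s * u'' s\<bar> < \<eta>2" using N sN by auto
    define \<gamma> where "\<gamma> = - u'' s"
    have \<gamma>0: "\<gamma> \<ge> 0" using u''_nonpos s0 by (simp add: \<gamma>_def)
    have up: "u' s > 0" using u'_pos s0 by simp
    define b where "b = (\<chi> i. a$i * x$i)"
    have xpos: "(1/2) * (x \<bullet> (diag_mat a *v x)) > 0" using s0 by (simp add: s_def)
    define H where "H = hessian (\<lambda>y. u ((1/2) * (y \<bullet> (diag_mat a *v y)))) x"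
    have Hf: "H = (\<chi> i j. u' s * (if i = j then a$i else 0) + u'' s * b$i * b$j)"
      unfolding H_def hess[OF u_deriv u'_deriv xpos] s_def[symmetric] b_def by simp
    have Ht: "transpose H = H" unfolding Hf by (simp add: transpose_def vec_eq_iff mult_ac)
    define al where "al = (\<chi> i. u' s * a$i)"
    have als: "\<forall>i j. i \<le> j \<longrightarrow> al$i \<le> al$j" using a_sorted up by (simp add: al_def mult_left_mono)
    have Hw: "H *v w = (\<chi> i. u' s * a$i * w$i + u'' s * b$i * (b \<bullet> w))" for w
      unfolding Hf by (simp add: vec_eq_iff matrix_vector_mult_def inner_vec_def sum.distrib distrib_left
          if_distrib[of "\<lambda>z. _ * z"] sum_distrib_left mult_ac cong: if_cong)
    have quad: "\<forall>w. w \<bullet> (H *v w) \<le> (\<Sum>i\<in>UNIV. al$i * (w$i)^2)"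
    proof
      fix w :: "real^('n::{finite,linorder})"
      define c where "c = b \<bullet> w"
      have "w \<bullet> (H *v w) = (\<Sum>i\<in>UNIV. w$i * (u' s * a$i * w$i)) + (\<Sum>i\<in>UNIV. w$i * (u'' s * b$i * c))"
        by (simp add: Hw inner_vec_def[of w] distrib_left sum.distrib c_def)
      also have "(\<Sum>i\<in>UNIV. w$i * (u'' s * b$i * c)) = u'' s * c * (\<Sum>i\<in>UNIV. b$i * w$i)"
        by (simp add: sum_distrib_left mult_ac)
      also have "(\<Sum>i\<in>UNIV. b$i * w$i) = c" by (simp add: c_def inner_vec_def)
      also have "(\<Sum>i\<in>UNIV. w$i * (u' s * a$i * w$i)) = (\<Sum>i\<in>UNIV. al$i * (w$i)^2)"
        by (simp add: al_def power2_eq_square mult_ac)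
      finally have eq: "w \<bullet> (H *v w) = (\<Sum>i\<in>UNIV. al$i * (w$i)^2) + u'' s * c * c" .
      have "u'' s * c * c \<le> 0" using u''_nonpos s0
        by (metis mult.assoc mult_nonpos_nonneg zero_le_square)
      thus "w \<bullet> (H *v w) \<le> (\<Sum>i\<in>UNIV. al$i * (w$i)^2)" using eq by simp
    qed
    have trH: "trace H = (\<Sum>i\<in>UNIV. u' s * a$i + u'' s * (b$i)^2)"
      unfolding Hf by (simp add: trace_def power2_eq_square mult_ac)
    define L where "L = eigvals H"
    have EB: "(\<forall>i j. i \<le> j \<longrightarrow> L $ i \<le> L $ j) \<and> (\<forall>i. L $ i \<le> al$i) \<and> (\<Sum>i\<in>UNIV. L $ i) = trace H"
      unfolding L_def by (rule eig_bound[OF Ht als quad])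
    define ee where "ee i = u' s * a$i - L$i" for i
    have ee0: "\<forall>i. ee i \<ge> 0" using EB by (simp add: ee_def al_def)
    define D where "D = \<gamma> * (\<Sum>i\<in>UNIV. (b$i)^2)"
    have eeD: "(\<Sum>i\<in>UNIV. ee i) = D"
      using EB by (simp add: ee_def sum_subtractf trH sum.distrib D_def \<gamma>_def sum_distrib_left sum_negf)
    have s2: "2 * s = (\<Sum>i\<in>UNIV. a$i * (x$i)^2)"
      by (simp add: s_def diag_mv inner_vec_def power2_eq_square mult_ac)
    have bs: "(\<Sum>i\<in>UNIV. (b$i)^2) \<le> an * (2 * s)"
    proof -
      have "(\<Sum>i\<in>UNIV. (b$i)^2) \<le> (\<Sum>i\<in>UNIV. an * (a$i * (x$i)^2))"
      proof (rule sum_mono)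
        fix i
        have "a$i * (a$i * (x$i)^2) \<le> an * (a$i * (x$i)^2)"
          using a_le_an[of i] a_pos[rule_format, of i] by (intro mult_right_mono) simp_all
        thus "(b$i)^2 \<le> an * (a$i * (x$i)^2)" by (simp add: b_def power2_eq_square mult_ac)
      qed
      thus ?thesis by (simp add: s2 sum_distrib_left)
    qed
    define g where "g = s * \<gamma>"
    have g0: "g \<ge> 0" using s0 \<gamma>0 by (simp add: g_def)
    have gl: "g < \<eta>2"
    proof -
      have "s * u'' s \<le> 0" using s0 \<gamma>0 by (simp add: \<gamma>_def mult_nonneg_nonpos)
      thus ?thesis using u2 by (simp add: g_def \<gamma>_def)
    qed
    have D2: "D \<le> 2 * an * g"
      using mult_left_mono[OF bs \<gamma>0] by (simp add: D_def g_def mult_ac)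
    have D0: "D \<ge> 0" using \<gamma>0 by (simp add: D_def sum_nonneg)
    define V where "V = (\<chi> i. if i = Min ?N then a $ i * u' s + (2 * a $ Max ?N + \<delta>) * s * u'' s
                           else a $ i * u' s)"
    have LV: "(L - V)$i = (if i = i1 then (2 * an + \<delta>) * g else 0) - ee i" for i
      by (simp add: V_def ee_def i1_def an_def g_def \<gamma>_def algebra_simps)
    have nnan: "nn * an > 0" using nn1 an_pos by simp
    have t1: "nn * (\<bar>u' s - 1\<bar> * an) < r / 2"
    proof -
      have "nn * (\<bar>u' s - 1\<bar> * an) \<le> nn * (\<eta>1 * an)"
        using u1 nn1 an_pos by (intro mult_left_mono mult_right_mono) auto
      also have "\<dots> = r / 2 * (nn * an / (nn * an + 1))"
        using nn1 an_pos by (simp add: \<eta>1_def field_simps)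
      also have "\<dots> < r / 2 * 1"
        using r0 nnan by (intro mult_strict_left_mono) (simp_all add: divide_less_eq)
      finally show ?thesis by simp
    qed
    have t2: "(2 * an + \<delta>) * g < r / 2"
    proof -
      have "(2 * an + \<delta>) * g \<le> (2 * an + \<delta>) * \<eta>2"
        using gl an_pos delta_pos by (intro mult_left_mono) auto
      also have "\<dots> = r / 2 * ((2 * an + \<delta>) / (2 * an + \<delta> + 1))"
        using an_pos delta_pos by (simp add: \<eta>2_def field_simps)
      also have "\<dots> < r / 2 * 1"
        using r0 an_pos delta_pos by (intro mult_strict_left_mono) (simp_all add: divide_less_eq)
      finally show ?thesis by simp
    qed
    have comp: "\<bar>a$i - a$i * u' s\<bar> \<le> \<bar>u' s - 1\<bar> * an" for i
    proof -
      have "a$i - a$i * u' s = (1 - u' s) * a$i" by (simp add: algebra_simps)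
      hence "\<bar>a$i - a$i * u' s\<bar> = \<bar>1 - u' s\<bar> * a$i" using a_pos[rule_format, of i]
        by (simp add: abs_mult)
      hence "\<bar>a$i - a$i * u' s\<bar> = \<bar>u' s - 1\<bar> * a$i" by (simp add: abs_minus_commute)
      also have "\<dots> \<le> \<bar>u' s - 1\<bar> * an" using a_le_an by (simp add: mult_left_mono)
      finally show ?thesis .
    qed
    have LB: "L \<in> ball a r"
    proof -
      have "dist a L \<le> (\<Sum>i\<in>UNIV. \<bar>(a - L)$i\<bar>)" unfolding dist_norm by (rule norm_le_l1_cart)
      also have "\<dots> \<le> (\<Sum>i\<in>UNIV. \<bar>u' s - 1\<bar> * an + ee i)"
      proof (rule sum_mono)
        fix i
        have "(a - L)$i = (a$i - a$i * u' s) + ee i" by (simp add: ee_def algebra_simps)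
        hence "\<bar>(a - L)$i\<bar> \<le> \<bar>a$i - a$i * u' s\<bar> + \<bar>ee i\<bar>" by (simp only: abs_triangle_ineq)
        thus "\<bar>(a - L)$i\<bar> \<le> \<bar>u' s - 1\<bar> * an + ee i" using comp[of i] ee0[rule_format, of i] by simp
      qed
      also have "\<dots> = nn * (\<bar>u' s - 1\<bar> * an) + D" by (simp add: sum.distrib eeD nn_def)
      also have "\<dots> < r"
      proof -
        have "D \<le> (2 * an + \<delta>) * g"
          using D2 mult_nonneg_nonneg[OF less_imp_le[OF delta_pos] g0] by (simp add: distrib_right)
        thus ?thesis using t1 t2 by linarith
      qed
      finally show ?thesis by simp
    qed
    have VB: "V \<in> ball a r"
    proof -
      have "dist a V \<le> (\<Sum>i\<in>UNIV. \<bar>(a - V)$i\<bar>)" unfolding dist_norm by (rule norm_le_l1_cart)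
      also have "\<dots> \<le> (\<Sum>i\<in>UNIV. \<bar>u' s - 1\<bar> * an + (if i = i1 then (2 * an + \<delta>) * g else 0))"
      proof (rule sum_mono)
        fix i
        have "(a - V)$i = (a$i - a$i * u' s) + (if i = i1 then (2 * an + \<delta>) * g else 0)"
          by (simp add: V_def i1_def an_def g_def \<gamma>_def algebra_simps)
        thus "\<bar>(a - V)$i\<bar> \<le> \<bar>u' s - 1\<bar> * an + (if i = i1 then (2 * an + \<delta>) * g else 0)"
          using comp[of i] g0 an_pos delta_pos by (smt (verit) mult_nonneg_nonneg)
      qed
      also have "\<dots> = nn * (\<bar>u' s - 1\<bar> * an) + (2 * an + \<delta>) * g" by (simp add: sum.distrib nn_def)
      also have "\<dots> < r" using t1 t2 by simp
      finally show ?thesis by simp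
    qed
    have fLV: "f V \<le> f L"
    proof (rule mvt_ineq[where B = "ball a r" and f' = f'])
      show "\<forall>\<xi>\<in>ball a r. (f has_derivative f' \<xi>) (at \<xi>)" using f_deriv rG by blast
      show "convex (ball a r)" by simp
      show "V \<in> ball a r" by (rule VB)
      show "L \<in> ball a r" by (rule LB)
      show "\<forall>\<xi>\<in>ball a r. 0 \<le> (\<Sum>i\<in>UNIV. (L - V)$i * f' \<xi> (axis i 1))"
      proof
        fix \<xi> assume \<xi>: "\<xi> \<in> ball a r"
        have F1: "\<forall>i. F i \<xi> - F i1 \<xi> \<le> 2 * ep"
        proof
          fix i
          have "F i a \<le> F i1 a" using f_max1 by (simp add: F_def i1_def)
          thus "F i \<xi> - F i1 \<xi> \<le> 2 * ep" using Fclose[OF \<xi>, of i] Fclose[OF \<xi>, of i1] by linarith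
        qed
        have F1c: "F i1 \<xi> \<ge> c0 - ep" using Fclose[OF \<xi>, of i1] by (simp add: c0_def)
        have Fp: "F i1 \<xi> > 0" using f_incr \<xi> rG by (auto simp: F_def)
        have "0 \<le> (\<Sum>i\<in>UNIV. ((if i = i1 then (2 * an + \<delta>) * g else 0) - ee i) * F i \<xi>)"
          by (rule key_ineq[OF ee0 eeD D2 g0 F1 F1c Fp _ delta_pos]) (use ce ep0 in simp_all)
        thus "0 \<le> (\<Sum>i\<in>UNIV. (L - V)$i * f' \<xi> (axis i 1))" by (simp only: LV F_def)
      qed
    qed
    show "let s = (1/2) * (x \<bullet> (diag_mat a *v x));
                L = eigvals (hessian (\<lambda>y. u ((1/2) * (y \<bullet> (diag_mat a *v y)))) x);
                V = (\<chi> i. if i = Min UNIV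
                           then a $ i * u' s + (2 * a $ Max UNIV + \<delta>) * s * u'' s
                           else a $ i * u' s)
            in L \<in> \<Gamma> \<and> V \<in> \<Gamma> \<and> f L \<ge> f V"
      unfolding Let_def s_def[symmetric] H_def[symmetric] L_def[symmetric] V_def[symmetric]
      using LB VB rG fLV by auto
  qed
qed

end
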